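(* Let $M^7=\mathbb CP^2\times S^3=(\mathrm{SU}_3/\mathrm U_2)\times\mathrm{SU}_2$ with an invariant Riemannian metric $g=g_4+g_3$, where $g_4$ is a positive multiple $a$ of the Fubini–Study metric and $g_3=\sum_{i=1}^3c_i\,\beta^i\otimes\beta^i$ ($c_i>0$) for a left-invariant coframe $\beta^1,\beta^2,\beta^3$ on $\mathrm{SU}_2$ with $d\beta^1=-\beta^2\wedge\beta^3$, $d\beta^2=-\beta^3\wedge\beta^1$, $d\beta^3=-\beta^1\wedge\beta^2$. Let $\mathrm{vol}_3=\sqrt{c_1c_2c_3}\,\beta^1\wedge\beta^2\wedge\beta^3$, let $\omega$ be the invariant Kähler form of $(\mathbb CP^2,g_4)$, $\mathrm{vol}_4$ the volume form of $g_4$ for the orientation in which $\omega$ is anti-self-dual, and orient $M^7$ by $\mathrm{vol}_4\wedge\mathrm{vol}_3$. Then the $(\mathrm{SU}_3\times\mathrm{SU}_2)$-invariant special 3-forms $\phi$ on $(M^7,g)$ (i.e. $d\star_7\phi=0$ and $d\phi=f\star_7\phi$ for a constant $f$) are exactly the following: - if $f=0$: $\phi=b\,\mathrm{vol}_3$ with $b$ constant; - if $f\neq0$: $\phi=\omega\wedge\theta$ with $\theta=\sum_i\theta_i\beta^i$ ($\theta_i$ constants) satisfying $\big(f-\sqrt{c_1/(c_2c_3)}\big)\theta_1=0$, $\big(f-\sqrt{c_2/(c_3c_1)}\big)\theta_2=0$, $\big(f-\sqrt{c_3/(c_1c_2)}\big)\theta_3=0$.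
   Context: Hodge star $\star_7$ of $(M^7,g)$ defined by $\alpha\wedge\star\beta=\langle\alpha,\beta\rangle\mathrm{vol}$ with $\langle\alpha,\beta\rangle=\frac1{k!}g(\alpha,\beta)$ on $k$-forms and $\mathrm{vol}=\mathrm{vol}_4\wedge\mathrm{vol}_3$. Every invariant 3-form on $M^7$ has the form $\omega\wedge\theta+b\,\mathrm{vol}_3$ with $\theta$ a left-invariant 1-form on $\mathrm{SU}_2$ and $b$ constant. *)

theory Defs
  imports Complex_Main
begin

text \<open>
  Algebraic model of the (SU3 x SU2)-invariant differential forms on
  M^7 = CP^2 x S^3.  The SU3-invariant forms on CP^2 are spanned by
  e_0 = 1, e_1 = omega (the Kaehler form), e_2 = vol_4; the SU2 left-invariant
  forms on S^3 are spanned by beta^S = beta^{i1} ^ ... ^ beta^{ir}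
  (S = {i1 < ... < ir} a subset of {1,2,3}).  An invariant form is encoded by
  its constant coefficients  A k S  with respect to the basis  e_k ^ beta^S.
\<close>

type_synonym form = "nat \<Rightarrow> nat set \<Rightarrow> real"

definition wf :: "form \<Rightarrow> bool" where
  "wf A \<longleftrightarrow> (\<forall>k S. A k S \<noteq> 0 \<longrightarrow> k \<le> 2 \<and> S \<subseteq> {1,2,3})"

definition homog :: "nat \<Rightarrow> form \<Rightarrow> bool" where
  "homog p A \<longleftrightarrow> (\<forall>k S. A k S \<noteq> 0 \<longrightarrow> 2 * k + card S = p)"

definition fzero :: form where "fzero = (\<lambda>k S. 0)"
definition fadd :: "form \<Rightarrow> form \<Rightarrow> form" where "fadd A B = (\<lambda>k S. A k S + B k S)"
definition fdiff :: "form \<Rightarrow> form \<Rightarrow> form" where "fdiff A B = (\<lambda>k S. A k S - B k S)"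
definition smul :: "real \<Rightarrow> form \<Rightarrow> form" where "smul r A = (\<lambda>k S. r * A k S)"

definition bas :: "nat \<Rightarrow> nat set \<Rightarrow> form" where
  "bas k S = (\<lambda>j U. if j = k \<and> U = S then 1 else 0)"

text \<open>sign of beta^S ^ beta^T = eps S T * beta^(S Un T) for disjoint S, T\<close>
definition eps :: "nat set \<Rightarrow> nat set \<Rightarrow> real" where
  "eps S T = (-1) ^ card {(i, j). i \<in> S \<and> j \<in> T \<and> j < i}"

text \<open>wedge table on CP^2 side: e_0 unit, omega ^ omega = -2 vol_4
  (omega anti-self-dual w.r.t. vol_4, |omega|^2 = 2), all else zero\<close>
definition c4 :: "nat \<Rightarrow> nat \<Rightarrow> nat \<Rightarrow> real" where
  "c4 k l j = (if k = 0 \<and> l = j then 1 else if l = 0 \<and> k = j then 1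
               else if k = 1 \<and> l = 1 \<and> j = 2 then -2 else 0)"

text \<open>wedge product (the CP^2 factors have even degree and commute with the beta's)\<close>
definition wedge :: "form \<Rightarrow> form \<Rightarrow> form" where
  "wedge A B = (\<lambda>j U. if j \<le> 2 \<and> U \<subseteq> {1,2,3} then
      (\<Sum>k\<in>{0..2::nat}. \<Sum>l\<in>{0..2::nat}. c4 k l j *
         (\<Sum>S\<in>Pow U. eps S (U - S) * A k S * B l (U - S)))
    else 0)"

text \<open>pointwise inner product  <a,b> = (1/k!) g(a,b)  of the metric
  g = g_4 + sum c_i beta^i (x) beta^i: |1|^2 = 1, |omega|^2 = 2, |vol_4|^2 = 1,
  |beta^i|^2 = 1/c_i, and the basis e_k ^ beta^S is orthogonal\<close>
definition n4 :: "nat \<Rightarrow> real" where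
  "n4 k = (if k = 1 then 2 else 1)"

definition finner :: "(nat \<Rightarrow> real) \<Rightarrow> form \<Rightarrow> form \<Rightarrow> real" where
  "finner c A B = (\<Sum>k\<in>{0..2::nat}. \<Sum>S\<in>Pow {1,2,3::nat}.
      n4 k * (\<Prod>i\<in>S. 1 / c i) * A k S * B k S)"

definition omega :: form where "omega = bas 1 {}"

definition vol3 :: "(nat \<Rightarrow> real) \<Rightarrow> form" where
  "vol3 c = smul (sqrt (c 1 * c 2 * c 3)) (bas 0 {1,2,3})"

definition vol4 :: form where "vol4 = bas 2 {}"

definition vol :: "(nat \<Rightarrow> real) \<Rightarrow> form" where
  "vol c = wedge vol4 (vol3 c)"

definition hstar :: "(nat \<Rightarrow> real) \<Rightarrow> nat \<Rightarrow> form \<Rightarrow> form" where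
  "hstar c p B = (THE P. wf P \<and> homog (7 - p) P \<and>
      (\<forall>A. wf A \<and> homog p A \<longrightarrow> wedge A P = smul (finner c A B) (vol c)))"

text \<open>exterior derivative: d omega = 0, d vol_4 = 0,
  d beta^1 = - beta^2 ^ beta^3, d beta^2 = - beta^3 ^ beta^1, d beta^3 = - beta^1 ^ beta^2,
  extended by the Leibniz rule\<close>
definition beta :: "nat \<Rightarrow> form" where "beta i = bas 0 {i}"

definition dbeta :: "nat \<Rightarrow> form" where
  "dbeta i = (if i = 1 then smul (-1) (wedge (beta 2) (beta 3))
        else if i = 2 then smul (-1) (wedge (beta 3) (beta 1))
        else if i = 3 then smul (-1) (wedge (beta 1) (beta 2)) else fzero)"

fun blist :: "nat list \<Rightarrow> form" where
  "blist [] = bas 0 {}"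
| "blist (i # is) = wedge (beta i) (blist is)"

fun dlist :: "nat list \<Rightarrow> form" where
  "dlist [] = fzero"
| "dlist (i # is) = fdiff (wedge (dbeta i) (blist is)) (wedge (beta i) (dlist is))"

definition dform :: "form \<Rightarrow> form" where
  "dform A = (\<lambda>j U. \<Sum>k\<in>{0..2::nat}. \<Sum>S\<in>Pow {1,2,3::nat}.
      A k S * wedge (bas k {}) (dlist (sorted_list_of_set S)) j U)"

definition theta1 :: "real \<Rightarrow> real \<Rightarrow> real \<Rightarrow> form" where
  "theta1 t1 t2 t3 = fadd (smul t1 (beta 1)) (fadd (smul t2 (beta 2)) (smul t3 (beta 3)))"

definition special :: "(nat \<Rightarrow> real) \<Rightarrow> form \<Rightarrow> real \<Rightarrow> bool" where
  "special c phi f \<longleftrightarrow> dform (hstar c 3 phi) = fzero \<and> dform phi = smul f (hstar c 3 phi)"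

end

theory Submission
  imports Defs
begin

lemma wedge_smul_l: "wedge (smul a A) B = smul a (wedge A B)"
  unfolding wedge_def smul_def by (rule ext)+ (simp add: sum_distrib_left algebra_simps)
lemma wedge_smul_r: "wedge A (smul a B) = smul a (wedge A B)"
  unfolding wedge_def smul_def by (rule ext)+ (simp add: sum_distrib_left algebra_simps)
lemma wedge_fadd_l: "wedge (fadd A B) C = fadd (wedge A C) (wedge B C)"
  unfolding wedge_def fadd_def by (rule ext)+ (simp add: sum.distrib algebra_simps)
lemma wedge_fadd_r: "wedge A (fadd B C) = fadd (wedge A B) (wedge A C)"
  unfolding wedge_def fadd_def by (rule ext)+ (simp add: sum.distrib algebra_simps)
lemma wedge_fdiff_l: "wedge (fdiff A B) C = fdiff (wedge A C) (wedge B C)"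
  unfolding wedge_def fdiff_def by (rule ext)+ (simp add: sum_subtractf algebra_simps)
lemma wedge_fdiff_r: "wedge A (fdiff B C) = fdiff (wedge A B) (wedge A C)"
  unfolding wedge_def fdiff_def by (rule ext)+ (simp add: sum_subtractf algebra_simps)
lemma wedge_fzero_l: "wedge fzero A = fzero"
  unfolding wedge_def fzero_def by (rule ext)+ simp
lemma wedge_fzero_r: "wedge A fzero = fzero"
  unfolding wedge_def fzero_def by (rule ext)+ simp

lemma wedge_bas: "wedge (bas k S) (bas l T) =
  (if S \<inter> T = {} \<and> S \<union> T \<subseteq> {1,2,3} \<and> k + l \<le> 2
   then smul (c4 k l (k+l) * eps S T) (bas (k+l) (S \<union> T)) else fzero)"
proof (rule ext, rule ext)
  fix j U
  have A: "(\<Sum>S'\<in>Pow U. eps S' (U - S') * bas k S k' S' * bas l T l' (U - S'))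
     = (if k' = k \<and> l' = l \<and> S \<subseteq> U \<and> T = U - S then eps S T else 0)" if fU: "finite U" for k' l'
  proof -
    have "(\<Sum>S'\<in>Pow U. eps S' (U - S') * bas k S k' S' * bas l T l' (U - S'))
       = (\<Sum>S'\<in>Pow U. if S' = S then (if k' = k \<and> l' = l \<and> T = U - S then eps S T else 0) else 0)"
      by (rule sum.cong) (auto simp: bas_def)
    also have "\<dots> = (if S \<in> Pow U then (if k' = k \<and> l' = l \<and> T = U - S then eps S T else 0) else 0)"
      by (rule sum.delta) (simp add: fU)
    finally show ?thesis by auto
  qed
  show "wedge (bas k S) (bas l T) j U = (if S \<inter> T = {} \<and> S \<union> T \<subseteq> {1,2,3} \<and> k + l \<le> 2
   then smul (c4 k l (k+l) * eps S T) (bas (k+l) (S \<union> T)) else fzero) j U"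
  proof (cases "j \<le> 2 \<and> U \<subseteq> {1,2,3}")
    case True
    then have fU: "finite U" using finite_subset by blast
    let ?P = "S \<subseteq> U \<and> T = U - S"
    have B: "(\<Sum>k'\<in>{0..2::nat}. \<Sum>l'\<in>{0..2::nat}. c4 k' l' j *
         (if k' = k \<and> l' = l \<and> ?P then eps S T else 0))
       = (if k \<le> 2 \<and> l \<le> 2 \<and> ?P then c4 k l j * eps S T else 0)"
    proof -
      have I: "(\<Sum>l'\<in>{0..2::nat}. c4 k' l' j * (if k' = k \<and> l' = l \<and> ?P then eps S T else 0))
         = (if k' = k then (if l \<le> 2 \<and> ?P then c4 k l j * eps S T else 0) else 0)" for k'
      proof -
        have "(\<Sum>l'\<in>{0..2::nat}. c4 k' l' j * (if k' = k \<and> l' = l \<and> ?P then eps S T else 0))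
          = (\<Sum>l'\<in>{0..2::nat}. if l' = l then (if k' = k \<and> ?P then c4 k' l j * eps S T else 0) else 0)"
          by (intro sum.cong refl) auto
        also have "\<dots> = (if l \<in> {0..2} then (if k' = k \<and> ?P then c4 k' l j * eps S T else 0) else 0)"
          by (rule sum.delta) simp
        finally show ?thesis by auto
      qed
      have "(\<Sum>k'\<in>{0..2::nat}. \<Sum>l'\<in>{0..2::nat}. c4 k' l' j *
         (if k' = k \<and> l' = l \<and> ?P then eps S T else 0))
        = (\<Sum>k'\<in>{0..2::nat}. if k' = k then (if l \<le> 2 \<and> ?P then c4 k l j * eps S T else 0) else 0)"
        by (simp only: I)
      also have "\<dots> = (if k \<in> {0..2} then (if l \<le> 2 \<and> ?P then c4 k l j * eps S T else 0) else 0)"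
        by (rule sum.delta) simp
      finally show ?thesis by auto
    qed
    have W: "wedge (bas k S) (bas l T) j U = (if k \<le> 2 \<and> l \<le> 2 \<and> ?P then c4 k l j * eps S T else 0)"
    proof -
      have "wedge (bas k S) (bas l T) j U = (\<Sum>k'\<in>{0..2::nat}. \<Sum>l'\<in>{0..2::nat}. c4 k' l' j *
         (\<Sum>S'\<in>Pow U. eps S' (U - S') * bas k S k' S' * bas l T l' (U - S')))"
        unfolding wedge_def by (rule if_P[OF True])
      also have "\<dots> = (\<Sum>k'\<in>{0..2::nat}. \<Sum>l'\<in>{0..2::nat}. c4 k' l' j *
         (if k' = k \<and> l' = l \<and> ?P then eps S T else 0))"
        by (simp only: A[OF fU])
      also have "\<dots> = (if k \<le> 2 \<and> l \<le> 2 \<and> ?P then c4 k l j * eps S T else 0)" by (rule B)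
      finally show ?thesis .
    qed
    show ?thesis unfolding W using True
      by (auto simp: smul_def bas_def fzero_def c4_def)
  next
    case False
    then show ?thesis by (auto simp: wedge_def smul_def bas_def fzero_def)
  qed
qed
lemma epsc: "eps S T = (-1) ^ card {a. a \<in> S \<times> T \<and> snd a < fst a}"
  unfolding eps_def by (rule arg_cong[where f="\<lambda>n. (-1)^card n"]) auto
lemma col1: "{a. (a = x \<or> P a) \<and> Q a} = (if Q x then insert x {a. P a \<and> Q a} else {a. P a \<and> Q a})" by auto
lemma col2: "{a. (a = x) \<and> Q a} = (if Q x then {x} else {})" by auto
lemma col3: "{a. False \<and> Q a} = {}" by auto
lemmas epss = epsc col1 col2 col3

definition F :: "real \<Rightarrow> real \<Rightarrow> real \<Rightarrow> real \<Rightarrow> form" where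
  "F b t1 t2 t3 = fadd (smul b (bas 0 {1,2,3})) (fadd (smul t1 (bas 1 {1})) (fadd (smul t2 (bas 1 {2})) (smul t3 (bas 1 {3}))))"
definition G :: "real \<Rightarrow> real \<Rightarrow> real \<Rightarrow> real \<Rightarrow> form" where
  "G p q1 q2 q3 = fadd (smul p (bas 2 {})) (fadd (smul q1 (bas 1 {2,3})) (fadd (smul q2 (bas 1 {1,3})) (smul q3 (bas 1 {1,2}))))"

lemmas wlin = wedge_fadd_l wedge_fadd_r wedge_smul_l wedge_smul_r wedge_fdiff_l wedge_fdiff_r wedge_fzero_l wedge_fzero_r

lemma wedgeFG: "wedge (F a0 a1 a2 a3) (G p q1 q2 q3) = smul (a0*p - 2*a1*q1 + 2*a2*q2 - 2*a3*q3) (bas 2 {1,2,3})"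
  unfolding F_def G_def wlin wedge_bas
  apply (simp add: epss c4_def Int_insert_left insert_commute)
  apply (rule ext)+
  apply (simp add: fadd_def smul_def bas_def fzero_def)
  done

lemma sum02: "(\<Sum>k\<in>{0..2::nat}. g k) = g 0 + g 1 + g 2"
  by (simp add: numeral_2_eq_2 atLeast0AtMost atMost_Suc algebra_simps)

lemma sum_Pow_insert:
  assumes "finite A" "a \<notin> A"
  shows "sum f (Pow (insert a A)) = sum f (Pow A) + sum (\<lambda>S. f (insert a S)) (Pow A)"
proof -
  have "Pow (insert a A) = Pow A \<union> insert a ` Pow A" by (rule Pow_insert)
  moreover have "Pow A \<inter> insert a ` Pow A = {}" using assms by auto
  moreover have "inj_on (insert a) (Pow A)"
    by (rule inj_onI) (use assms in \<open>auto simp: insert_ident subset_iff\<close>)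
  ultimately show ?thesis using assms
    by (simp add: sum.union_disjoint sum.reindex)
qed
lemma sum_Pow_empty: "sum f (Pow {}) = f {}" by simp

lemma F_app: "F b t1 t2 t3 k S = (if k = 0 \<and> S = {1,2,3} then b else 0) + (if k = 1 \<and> S = {1} then t1 else 0)
   + (if k = 1 \<and> S = {2} then t2 else 0) + (if k = 1 \<and> S = {3} then t3 else 0)"
  by (simp add: F_def fadd_def smul_def bas_def)
lemma G_app: "G p q1 q2 q3 k S = (if k = 2 \<and> S = {} then p else 0) + (if k = 1 \<and> S = {2,3} then q1 else 0)
   + (if k = 1 \<and> S = {1,3} then q2 else 0) + (if k = 1 \<and> S = {1,2} then q3 else 0)"
  by (simp add: G_def fadd_def smul_def bas_def)

lemma ins_eq: "(insert a A = insert b B) \<longleftrightarrow> (insert a A \<subseteq> insert b B \<and> insert b B \<subseteq> insert a A)"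
  by blast
lemma smul_one: "smul 1 A = A" by (simp add: smul_def)
lemmas seteqs = ins_eq

lemma pow123: "S \<subseteq> {1,2,3::nat} \<Longrightarrow> S = {} \<or> S = {1} \<or> S = {2} \<or> S = {3} \<or> S = {1,2} \<or> S = {1,3} \<or> S = {2,3} \<or> S = {1,2,3}"
proof -
  assume "S \<subseteq> {1,2,3}"
  then have "S \<in> Pow {1,2,3}" by simp
  then show ?thesis by (simp add: Pow_insert insert_commute)
qed

lemma repF: assumes "wf A" "homog 3 A"
  shows "A = F (A 0 {1,2,3}) (A 1 {1}) (A 1 {2}) (A 1 {3})"
proof (rule ext, rule ext)
  fix k S
  show "A k S = F (A 0 {1,2,3}) (A 1 {1}) (A 1 {2}) (A 1 {3}) k S"
  proof (cases "A k S = 0")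
    case True then show ?thesis unfolding F_app by auto
  next
    case False
    with assms have k: "k \<le> 2" and S: "S \<subseteq> {1,2,3}" and c: "2*k + card S = 3"
      unfolding wf_def homog_def by auto
    from pow123[OF S] k c show ?thesis unfolding F_app by (auto simp: seteqs; presburger)
  qed
qed

lemma repG: assumes "wf A" "homog 4 A"
  shows "A = G (A 2 {}) (A 1 {2,3}) (A 1 {1,3}) (A 1 {1,2})"
proof (rule ext, rule ext)
  fix k S
  show "A k S = G (A 2 {}) (A 1 {2,3}) (A 1 {1,3}) (A 1 {1,2}) k S"
  proof (cases "A k S = 0")
    case True then show ?thesis unfolding G_app by auto
  next
    case False
    with assms have k: "k \<le> 2" and S: "S \<subseteq> {1,2,3}" and c: "2*k + card S = 4"
      unfolding wf_def homog_def by auto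
    from pow123[OF S] k c show ?thesis unfolding G_app by (auto simp: seteqs; presburger)
  qed
qed

lemma wfF: "wf (F b t1 t2 t3)" and homF: "homog 3 (F b t1 t2 t3)"
  unfolding wf_def homog_def F_app by auto
lemma wfG: "wf (G b t1 t2 t3)" and homG: "homog 4 (G b t1 t2 t3)"
  unfolding wf_def homog_def G_app by auto

lemma F_inj: "F b t1 t2 t3 = F b' t1' t2' t3' \<longleftrightarrow> b = b' \<and> t1 = t1' \<and> t2 = t2' \<and> t3 = t3'"
proof
  assume h: "F b t1 t2 t3 = F b' t1' t2' t3'"
  have "F b t1 t2 t3 0 {1,2,3} = F b' t1' t2' t3' 0 {1,2,3}" "F b t1 t2 t3 1 {1} = F b' t1' t2' t3' 1 {1}"
    "F b t1 t2 t3 1 {2} = F b' t1' t2' t3' 1 {2}" "F b t1 t2 t3 1 {3} = F b' t1' t2' t3' 1 {3}" using h by auto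
  then show "b = b' \<and> t1 = t1' \<and> t2 = t2' \<and> t3 = t3'" unfolding F_app by (simp add: seteqs)
qed simp

lemma G_inj: "G b t1 t2 t3 = G b' t1' t2' t3' \<longleftrightarrow> b = b' \<and> t1 = t1' \<and> t2 = t2' \<and> t3 = t3'"
proof
  assume h: "G b t1 t2 t3 = G b' t1' t2' t3'"
  have "G b t1 t2 t3 2 {} = G b' t1' t2' t3' 2 {}" "G b t1 t2 t3 1 {2,3} = G b' t1' t2' t3' 1 {2,3}"
    "G b t1 t2 t3 1 {1,3} = G b' t1' t2' t3' 1 {1,3}" "G b t1 t2 t3 1 {1,2} = G b' t1' t2' t3' 1 {1,2}" using h by auto
  then show "b = b' \<and> t1 = t1' \<and> t2 = t2' \<and> t3 = t3'" unfolding G_app by (simp add: seteqs)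
qed simp

lemma finnerFF: "finner c (F a0 a1 a2 a3) (F b0 b1 b2 b3) =
   a0*b0/(c 1 * c 2 * c 3) + 2*a1*b1/c 1 + 2*a2*b2/c 2 + 2*a3*b3/c 3"
  unfolding finner_def sum02
  by (simp add: sum_Pow_insert sum_Pow_empty F_app n4_def seteqs card_Pow del: Pow_empty)

lemma vol_eq: "vol c = smul (sqrt (c 1 * c 2 * c 3)) (bas 2 {1,2,3})"
  unfolding vol_def vol3_def vol4_def wlin wedge_bas by (simp add: epss c4_def smul_one)
lemma smul_smul: "smul a (smul b A) = smul (a*b) A" by (simp add: smul_def mult.assoc)
lemma smul_bas_inj: "smul x (bas k S) = smul y (bas k S) \<longleftrightarrow> x = y"
proof
  assume "smul x (bas k S) = smul y (bas k S)"
  then have "smul x (bas k S) k S = smul y (bas k S) k S" by simp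
  then show "x = y" by (simp add: smul_def bas_def)
qed simp

lemma hstarF:
  assumes c: "c 1 > 0" "c 2 > 0" "c 3 > 0"
  shows "hstar c 3 (F b t1 t2 t3) = G (b / sqrt (c 1 * c 2 * c 3)) (- t1 * sqrt (c 1 * c 2 * c 3) / c 1)
          (t2 * sqrt (c 1 * c 2 * c 3) / c 2) (- t3 * sqrt (c 1 * c 2 * c 3) / c 3)"
proof -
  define r where "r = sqrt (c 1 * c 2 * c 3)"
  have rpos: "r > 0" unfolding r_def using c by simp
  have rr: "r * r = c 1 * c 2 * c 3" unfolding r_def using c by (simp add: less_imp_le)
  have ex: "wedge A (G (b / r) (- t1 * r / c 1) (t2 * r / c 2) (- t3 * r / c 3)) = smul (finner c A (F b t1 t2 t3)) (vol c)"
    if h: "wf A" "homog 3 A" for A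
  proof -
    obtain a0 a1 a2 a3 where A: "A = F a0 a1 a2 a3" using repF[OF h] by blast
    have "a0 * (b / r) - 2 * a1 * (- t1 * r / c 1) + 2 * a2 * (t2 * r / c 2) - 2 * a3 * (- t3 * r / c 3)
      = (a0 * b / (c 1 * c 2 * c 3) + 2 * a1 * t1 / c 1 + 2 * a2 * t2 / c 2 + 2 * a3 * t3 / c 3) * r"
    proof -
      have e: "b / r = b * r / (c 1 * c 2 * c 3)" using rpos rr c by (simp add: field_simps)
      show ?thesis unfolding e using c by (simp add: field_simps)
    qed
    then show ?thesis unfolding A wedgeFG finnerFF vol_eq smul_smul r_def[symmetric] by simp
  qed
  have un: "P = G (b / r) (- t1 * r / c 1) (t2 * r / c 2) (- t3 * r / c 3)"
    if P: "wf P" "homog 4 P" "\<forall>A. wf A \<and> homog 3 A \<longrightarrow> wedge A P = smul (finner c A (F b t1 t2 t3)) (vol c)" for P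
  proof -
    obtain p q1 q2 q3 where PG: "P = G p q1 q2 q3" using repG[OF P(1,2)] by blast
    have e: "wedge (F a0 a1 a2 a3) P = smul (finner c (F a0 a1 a2 a3) (F b t1 t2 t3)) (vol c)" for a0 a1 a2 a3
      using P(3) wfF homF by blast
    from e[of 1 0 0 0] have 1: "p = b / (c 1 * c 2 * c 3) * r"
      unfolding PG wedgeFG finnerFF vol_eq smul_smul r_def[symmetric] smul_bas_inj by simp
    from e[of 0 1 0 0] have 2: "- 2 * q1 = 2 * t1 / c 1 * r"
      unfolding PG wedgeFG finnerFF vol_eq smul_smul r_def[symmetric] smul_bas_inj by simp
    from e[of 0 0 1 0] have 3: "2 * q2 = 2 * t2 / c 2 * r"
      unfolding PG wedgeFG finnerFF vol_eq smul_smul r_def[symmetric] smul_bas_inj by simp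
    from e[of 0 0 0 1] have 4: "- 2 * q3 = 2 * t3 / c 3 * r"
      unfolding PG wedgeFG finnerFF vol_eq smul_smul r_def[symmetric] smul_bas_inj by simp
    have e: "b / r = b * r / (c 1 * c 2 * c 3)" using rpos rr c by (simp add: field_simps)
    have "p = b / r" unfolding e 1 by simp
    moreover have "q1 = - t1 * r / c 1" "q2 = t2 * r / c 2" "q3 = - t3 * r / c 3" using 2 3 4 by simp_all
    ultimately show ?thesis unfolding PG by simp
  qed
  show ?thesis unfolding hstar_def r_def[symmetric]
    by (rule the_equality) (use ex un wfG homG in auto)
qed
lemma dform_smul: "dform (smul a A) = smul a (dform A)"
  unfolding dform_def smul_def by (rule ext)+ (simp add: sum_distrib_left algebra_simps)
lemma dform_fadd: "dform (fadd A B) = fadd (dform A) (dform B)"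
  unfolding dform_def fadd_def by (rule ext)+ (simp add: sum.distrib algebra_simps)

lemma sum_delta_c: "finite A \<Longrightarrow> (\<Sum>x\<in>A. if P \<and> x = a then f x else 0) = (if P \<and> a \<in> A then f a else 0)"
  by (cases P) (simp_all add: sum.delta)

lemma dform_bas: "dform (bas k S) = (if k \<le> 2 \<and> S \<subseteq> {1,2,3} then wedge (bas k {}) (dlist (sorted_list_of_set S)) else fzero)"
proof (rule ext, rule ext)
  fix j U
  define W where "W = (\<lambda>k S. wedge (bas k {}) (dlist (sorted_list_of_set S)) j U)"
  have bx: "bas k S k' S' * X = (if k' = k \<and> S' = S then X else 0)" for k' S' X by (simp add: bas_def)
  have "dform (bas k S) j U = (\<Sum>k'\<in>{0..2::nat}. \<Sum>S'\<in>Pow {1,2,3::nat}. if k' = k \<and> S' = S then W k' S' else 0)"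
    unfolding dform_def W_def by (simp only: bx)
  also have "\<dots> = (\<Sum>k'\<in>{0..2::nat}. if S \<in> Pow {1,2,3} \<and> k' = k then W k' S else 0)"
    by (intro sum.cong refl) (subst sum_delta_c, auto)
  also have "\<dots> = (if S \<in> Pow {1,2,3} \<and> k \<in> {0..2} then W k S else 0)"
    by (rule sum_delta_c) simp
  finally show "dform (bas k S) j U = (if k \<le> 2 \<and> S \<subseteq> {1,2,3} then wedge (bas k {}) (dlist (sorted_list_of_set S)) else fzero) j U"
    by (simp add: fzero_def W_def)
qed


lemma dF: "dform (F b t1 t2 t3) = G 0 (-t1) t2 (-t3)"
  unfolding F_def dform_fadd dform_smul dform_bas
  apply (simp add: dbeta_def beta_def wlin wedge_bas epss c4_def)
  apply (rule ext)+
  apply (simp add: G_def fadd_def fdiff_def smul_def bas_def fzero_def ins_eq)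
  done
lemma dG: "dform (G p q1 q2 q3) = fzero"
  unfolding G_def dform_fadd dform_smul dform_bas
  apply (simp add: dbeta_def beta_def wlin wedge_bas epss c4_def)
  apply (rule ext)+
  apply (simp add: fadd_def fdiff_def smul_def bas_def fzero_def ins_eq)
  done

lemma omtheta: "wedge omega (theta1 t1 t2 t3) = F 0 t1 t2 t3"
  unfolding omega_def theta1_def beta_def wlin wedge_bas
  apply (simp add: epss c4_def)
  apply (rule ext)+
  apply (simp add: F_def fadd_def smul_def bas_def fzero_def ins_eq)
  done

lemma vol3F: "smul b (vol3 c) = F (b * sqrt (c 1 * c 2 * c 3)) 0 0 0"
  unfolding vol3_def F_def by (rule ext)+ (simp add: fadd_def smul_def)

lemma smulG: "smul f (G p q1 q2 q3) = G (f*p) (f*q1) (f*q2) (f*q3)"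
  unfolding G_def by (rule ext)+ (simp add: fadd_def smul_def algebra_simps)

lemma G0: "fzero = G 0 0 0 0"
  unfolding G_def by (rule ext)+ (simp add: fadd_def smul_def fzero_def)
lemma keyeq: fixes r s cc t f :: real assumes "r > 0" "s * r = cc" "cc > 0"
  shows "(t = f * (t * r / cc)) \<longleftrightarrow> (f - s) * t = 0"
proof -
  have m0: "t * r / cc * cc = t * r" using assms(3) by simp
  have m: "f * (t * r / cc) * cc = f * t * r" by (simp only: mult.assoc m0)
  have "(t = f * (t * r / cc)) \<longleftrightarrow> t * cc = f * (t * r / cc) * cc" by (rule mult_right_cancel[symmetric]) (use assms(3) in simp)
  also have "\<dots> \<longleftrightarrow> t * cc = f * t * r" unfolding m ..
  also have "\<dots> \<longleftrightarrow> (t * s - f * t) * r = 0" using assms(2) by (auto simp: algebra_simps)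
  also have "\<dots> \<longleftrightarrow> (f - s) * t = 0" using assms(1) by (auto simp: algebra_simps)
  finally show ?thesis .
qed

lemma sq: fixes x y z :: real assumes "x > 0" "y > 0" "z > 0"
  shows "sqrt (x / (y * z)) * sqrt (x * y * z) = x"
proof -
  have "sqrt (x / (y * z)) * sqrt (x * y * z) = sqrt (x / (y * z) * (x * y * z))" by (rule real_sqrt_mult[symmetric])
  also have "x / (y * z) * (x * y * z) = x\<^sup>2" using assms by (simp add: field_simps power2_eq_square)
  also have "sqrt (x\<^sup>2) = x" using assms by simp
  finally show ?thesis .
qed

theorem proposition5p1:
  fixes c :: "nat \<Rightarrow> real" and phi :: form and f :: real
  assumes "c 1 > 0" and "c 2 > 0" and "c 3 > 0"
    and "wf phi" and "homog 3 phi"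
  shows "special c phi f \<longleftrightarrow>
    ((f = 0 \<and> (\<exists>b. phi = smul b (vol3 c))) \<or>
     (f \<noteq> 0 \<and> (\<exists>t1 t2 t3. phi = wedge omega (theta1 t1 t2 t3) \<and>
        (f - sqrt (c 1 / (c 2 * c 3))) * t1 = 0 \<and>
        (f - sqrt (c 2 / (c 3 * c 1))) * t2 = 0 \<and>
        (f - sqrt (c 3 / (c 1 * c 2))) * t3 = 0)))"
proof -
  define r where "r = sqrt (c 1 * c 2 * c 3)"
  have rpos: "r > 0" unfolding r_def using assms by simp
  obtain b t1 t2 t3 where phi: "phi = F b t1 t2 t3" using repF[OF assms(4,5)] by blast
  have k1: "sqrt (c 1 / (c 2 * c 3)) * r = c 1" unfolding r_def using sq[of "c 1" "c 2" "c 3"] assms by simp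
  have k2: "sqrt (c 2 / (c 3 * c 1)) * r = c 2" unfolding r_def using sq[of "c 2" "c 3" "c 1"] assms by (simp add: ac_simps)
  have k3: "sqrt (c 3 / (c 1 * c 2)) * r = c 3" unfolding r_def using sq[of "c 3" "c 1" "c 2"] assms by (simp add: ac_simps)
  have sp: "special c phi f \<longleftrightarrow> f * (b / r) = 0 \<and> t1 = f * (t1 * r / c 1) \<and> t2 = f * (t2 * r / c 2) \<and> t3 = f * (t3 * r / c 3)"
    unfolding special_def phi hstarF[OF assms(1-3)] r_def[symmetric] dF dG smulG G0 G_inj by auto
  have vol: "(\<exists>b'. phi = smul b' (vol3 c)) \<longleftrightarrow> t1 = 0 \<and> t2 = 0 \<and> t3 = 0"
  proof
    assume "\<exists>b'. phi = smul b' (vol3 c)"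
    then show "t1 = 0 \<and> t2 = 0 \<and> t3 = 0" unfolding phi vol3F F_inj by auto
  next
    assume "t1 = 0 \<and> t2 = 0 \<and> t3 = 0"
    then have "phi = smul (b / r) (vol3 c)" unfolding phi vol3F F_inj r_def[symmetric] using rpos by simp
    then show "\<exists>b'. phi = smul b' (vol3 c)" by blast
  qed
  have th: "(\<exists>s1 s2 s3. phi = wedge omega (theta1 s1 s2 s3) \<and>
        (f - sqrt (c 1 / (c 2 * c 3))) * s1 = 0 \<and>
        (f - sqrt (c 2 / (c 3 * c 1))) * s2 = 0 \<and>
        (f - sqrt (c 3 / (c 1 * c 2))) * s3 = 0) \<longleftrightarrow>
      b = 0 \<and> (f - sqrt (c 1 / (c 2 * c 3))) * t1 = 0 \<and>
        (f - sqrt (c 2 / (c 3 * c 1))) * t2 = 0 \<and>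
        (f - sqrt (c 3 / (c 1 * c 2))) * t3 = 0"
    unfolding phi omtheta F_inj by auto
  have e1: "t1 = f * (t1 * r / c 1) \<longleftrightarrow> (f - sqrt (c 1 / (c 2 * c 3))) * t1 = 0"
    by (rule keyeq[OF rpos k1 assms(1)])
  have e2: "t2 = f * (t2 * r / c 2) \<longleftrightarrow> (f - sqrt (c 2 / (c 3 * c 1))) * t2 = 0"
    by (rule keyeq[OF rpos k2 assms(2)])
  have e3: "t3 = f * (t3 * r / c 3) \<longleftrightarrow> (f - sqrt (c 3 / (c 1 * c 2))) * t3 = 0"
    by (rule keyeq[OF rpos k3 assms(3)])
  show ?thesis
  proof (cases "f = 0")
    case True
    then show ?thesis unfolding sp vol by auto
  next
    case False
    then show ?thesis unfolding sp th e1 e2 e3 using rpos by auto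
  qed
qed
end
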